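(* Let $(G,+)$ be a group and let $(G,+,* )$ and $(G,+,\odot)$ be interchange near rings with underlying group $(G,+)$. Define $\varepsilon_*(x)=x*0$, $\eta_*(x)=0*x$, $\varepsilon_\odot(x)=x\odot 0$, $\eta_\odot(x)=0\odot x$. Then $(G,+,* )\cong(G,+,\odot)$ (as interchange near rings) if and only if the pairs $(\varepsilon_*,\eta_* )$ and $(\varepsilon_\odot,\eta_\odot)$ are similar, i.e. there exists $\alpha\in\mathrm{Aut}(G,+)$ with $\alpha^{-1}\varepsilon_*\alpha = \varepsilon_\odot$ and $\alpha^{-1}\eta_*\alpha = \eta_\odot$.
   Context: An interchange near ring is a triple $(G,+,\bullet)$ where $(G,+)$ is a group (written additively, not necessarily abelian, identity $0$) and $\bullet$ is a binary operation on $G$ satisfying the interchange law $(w+x)\bullet(y+z) = (w\bullet y)+(x\bullet z)$ for all $w,x,y,z\in G$. An isomorphism of interchange near rings $(G_1,+_1,\bullet_1)\to(G_2,+_2,\bullet_2)$ is a bijective group homomorphism $\varphi$ with $\varphi(x\bullet_1 y)=\varphi(x)\bullet_2\varphi(y)$ for all $x,y$. Composition of maps is written $\alpha\beta = \alpha\circ\beta$. *)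

theory Defs
  imports Main
begin

text \<open>The group (G,+) is modelled as the whole carrier of a type of class group_add
  (written additively, not necessarily abelian).\<close>

definition interchange_near_ring :: "('a::group_add \<Rightarrow> 'a \<Rightarrow> 'a) \<Rightarrow> bool" where
  "interchange_near_ring m \<longleftrightarrow> (\<forall>w x y z. m (w + x) (y + z) = m w y + m x z)"

definition group_hom :: "('a::group_add \<Rightarrow> 'b::group_add) \<Rightarrow> bool" where
  "group_hom f \<longleftrightarrow> (\<forall>x y. f (x + y) = f x + f y)"

definition group_aut :: "('a::group_add \<Rightarrow> 'a) \<Rightarrow> bool" where
  "group_aut f \<longleftrightarrow> bij f \<and> group_hom f"

definition inr_iso :: "('a::group_add \<Rightarrow> 'a \<Rightarrow> 'a) \<Rightarrow> ('b::group_add \<Rightarrow> 'b \<Rightarrow> 'b) \<Rightarrow> ('a \<Rightarrow> 'b) \<Rightarrow> bool" where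
  "inr_iso m1 m2 \<phi> \<longleftrightarrow> bij \<phi> \<and> group_hom \<phi> \<and> (\<forall>x y. \<phi> (m1 x y) = m2 (\<phi> x) (\<phi> y))"

definition inr_isomorphic :: "('a::group_add \<Rightarrow> 'a \<Rightarrow> 'a) \<Rightarrow> ('b::group_add \<Rightarrow> 'b \<Rightarrow> 'b) \<Rightarrow> bool" where
  "inr_isomorphic m1 m2 \<longleftrightarrow> (\<exists>\<phi>. inr_iso m1 m2 \<phi>)"

end

theory Submission
  imports Defs
begin

lemma inr_split:
  assumes "interchange_near_ring m"
  shows "m x y = m x 0 + m 0 y"
  using assms unfolding interchange_near_ring_def
  by (metis add.left_neutral add.right_neutral)

lemma hom_zero: "group_hom f \<Longrightarrow> f 0 = (0::'b::group_add)"
  unfolding group_hom_def by (metis add.right_neutral add_left_imp_eq add_0_left)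

lemma inv_hom:
  assumes "bij f" "group_hom f"
  shows "group_hom (inv f)"
  unfolding group_hom_def
proof (intro allI)
  fix x y
  have "f (inv f x + inv f y) = x + y"
    using assms unfolding group_hom_def by (simp add: bij_is_surj surj_f_inv_f)
  then show "inv f (x + y) = inv f x + inv f y"
    using assms(1) by (metis bij_inv_eq_iff)
qed

theorem theorem3p5:
  fixes mul1 mul2 :: "'a::group_add \<Rightarrow> 'a \<Rightarrow> 'a"
  assumes "interchange_near_ring mul1"
    and "interchange_near_ring mul2"
  shows "inr_isomorphic mul1 mul2 \<longleftrightarrow>
    (\<exists>\<alpha>. group_aut \<alpha> \<and>
        inv \<alpha> \<circ> (\<lambda>x. mul1 x 0) \<circ> \<alpha> = (\<lambda>x. mul2 x 0) \<and>
        inv \<alpha> \<circ> (\<lambda>x. mul1 0 x) \<circ> \<alpha> = (\<lambda>x. mul2 0 x))"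
proof
  assume "inr_isomorphic mul1 mul2"
  then obtain \<phi> where b: "bij \<phi>" and h: "group_hom \<phi>" and m: "\<And>x y. \<phi> (mul1 x y) = mul2 (\<phi> x) (\<phi> y)"
    unfolding inr_isomorphic_def inr_iso_def by blast
  have z: "\<phi> 0 = 0" using hom_zero[OF h] .
  have ii: "inv (inv \<phi>) = \<phi>" using b by (simp add: inv_inv_eq)
  have fi: "\<And>x. \<phi> (inv \<phi> x) = x" using b by (simp add: bij_is_surj surj_f_inv_f)
  show "\<exists>\<alpha>. group_aut \<alpha> \<and>
        inv \<alpha> \<circ> (\<lambda>x. mul1 x 0) \<circ> \<alpha> = (\<lambda>x. mul2 x 0) \<and>
        inv \<alpha> \<circ> (\<lambda>x. mul1 0 x) \<circ> \<alpha> = (\<lambda>x. mul2 0 x)"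
    apply (rule exI[of _ "inv \<phi>"])
    using b h inv_hom[OF b h] bij_imp_bij_inv[OF b]
    by (auto simp: group_aut_def ii fun_eq_iff m z fi)
next
  assume "\<exists>\<alpha>. group_aut \<alpha> \<and>
        inv \<alpha> \<circ> (\<lambda>x. mul1 x 0) \<circ> \<alpha> = (\<lambda>x. mul2 x 0) \<and>
        inv \<alpha> \<circ> (\<lambda>x. mul1 0 x) \<circ> \<alpha> = (\<lambda>x. mul2 0 x)"
  then obtain \<alpha> where b: "bij \<alpha>" and h: "group_hom \<alpha>"
    and e1: "\<And>u. inv \<alpha> (mul1 (\<alpha> u) 0) = mul2 u 0"
    and e2: "\<And>u. inv \<alpha> (mul1 0 (\<alpha> u)) = mul2 0 u"
    unfolding group_aut_def fun_eq_iff by auto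
  have hi: "group_hom (inv \<alpha>)" using inv_hom[OF b h] .
  have fi: "\<And>x. \<alpha> (inv \<alpha> x) = x" using b by (simp add: bij_is_surj surj_f_inv_f)
  have "inr_iso mul1 mul2 (inv \<alpha>)"
    unfolding inr_iso_def
  proof (intro conjI allI)
    show "bij (inv \<alpha>)" using bij_imp_bij_inv[OF b] .
    show "group_hom (inv \<alpha>)" using hi .
    fix x y
    have "inv \<alpha> (mul1 x y) = inv \<alpha> (mul1 x 0) + inv \<alpha> (mul1 0 y)"
      using inr_split[OF assms(1)] hi unfolding group_hom_def by metis
    also have "\<dots> = mul2 (inv \<alpha> x) 0 + mul2 0 (inv \<alpha> y)"
      using e1[of "inv \<alpha> x"] e2[of "inv \<alpha> y"] by (simp add: fi)
    also have "\<dots> = mul2 (inv \<alpha> x) (inv \<alpha> y)"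
      using inr_split[OF assms(2)] by metis
    finally show "inv \<alpha> (mul1 x y) = mul2 (inv \<alpha> x) (inv \<alpha> y)" .
  qed
  then show "inr_isomorphic mul1 mul2" unfolding inr_isomorphic_def by blast
qed

end
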